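(* Let $n\ge 1$ and $q>1$. Any optimal strategy (one of maximum success probability) for the New Hats-on-a-line Game with $q$ hat colours and $n$ players is a restricted strategy.
   Context: The New Hats-on-a-line Game with $q$ colours and $n$ players: players $P_1,\dots,P_n$ stand in a line, and each player $P_i$ receives a hat whose colour $c_i$ is chosen uniformly at random from a fixed set of $q$ colours, independently of the other hats. Player $P_i$ sees exactly the hat colours $c_{i+1},\dots,c_n$. The players respond sequentially in the order $P_1,\dots,P_n$; each response is either a colour (a guess of one's own hat colour) or "pass", and each player hears all previous responses. No other communication is allowed, apart from agreeing on a strategy beforehand. A strategy specifies (deterministically), for each player $P_i$, his response as a function of the colours he sees and the responses he has heard. The players win if at least one player guesses correctly and no player guesses incorrectly; the success probability of a strategy is the probability that the players win. A strategy is restricted if, for every configuration of hats $(c_1,\dots,c_n)$, any guess made by a player other than $P_1$ is correct. *)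

theory Defs
  imports Complex_Main
begin

text \<open>Colours are 0,...,q-1. Players P_1..P_n are indexed 0..n-1 (player i is P_(i+1)).
  A hat configuration is a list c of length n with entries < q; c!i is the hat of player i.\<close>

datatype response = Pass | Guess nat

text \<open>A strategy: player i responds as a function of the colours he sees
  (the list drop (Suc i) c, i.e. the hats of the later players) and the list of
  responses he has heard (those of players 0..i-1, in order).\<close>
type_synonym strategy = "nat \<Rightarrow> nat list \<Rightarrow> response list \<Rightarrow> response"

definition valid_strategy :: "nat \<Rightarrow> strategy \<Rightarrow> bool" where
  "valid_strategy q s \<longleftrightarrow> (\<forall>i seen heard g. s i seen heard = Guess g \<longrightarrow> g < q)"

definition configs :: "nat \<Rightarrow> nat \<Rightarrow> nat list set" where
  "configs q n = {c. length c = n \<and> (\<forall>x\<in>set c. x < q)}"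

fun responses :: "strategy \<Rightarrow> nat list \<Rightarrow> nat \<Rightarrow> response list" where
  "responses s c 0 = []"
| "responses s c (Suc i) = responses s c i @ [s i (drop (Suc i) c) (responses s c i)]"

definition wins :: "strategy \<Rightarrow> nat list \<Rightarrow> bool" where
  "wins s c \<longleftrightarrow> (let r = responses s c (length c) in
     (\<exists>i<length c. r ! i = Guess (c ! i)) \<and>
     (\<forall>i<length c. \<forall>g. r ! i = Guess g \<longrightarrow> g = c ! i))"

definition success_prob :: "nat \<Rightarrow> nat \<Rightarrow> strategy \<Rightarrow> real" where
  "success_prob q n s = real (card {c \<in> configs q n. wins s c}) / real q ^ n"

definition optimal_strategy :: "nat \<Rightarrow> nat \<Rightarrow> strategy \<Rightarrow> bool" where
  "optimal_strategy q n s \<longleftrightarrow> valid_strategy q s \<and>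
     (\<forall>t. valid_strategy q t \<longrightarrow> success_prob q n t \<le> success_prob q n s)"

definition restricted_strategy :: "nat \<Rightarrow> nat \<Rightarrow> strategy \<Rightarrow> bool" where
  "restricted_strategy q n s \<longleftrightarrow>
     (\<forall>c\<in>configs q n. \<forall>i. 1 \<le> i \<and> i < n \<longrightarrow>
        (\<forall>g. responses s c n ! i = Guess g \<longrightarrow> g = c ! i))"

end

theory Submission
  imports Defs
begin

lemma resp_len: "length (responses s c k) = k"
  by (induction k) auto

lemma resp_prefix: "i < k \<Longrightarrow> responses s c k ! i = s i (drop (Suc i) c) (responses s c i)"
proof (induction k)
  case 0 then show ?case by simp
next
  case (Suc k)
  show ?case
  proof (cases "i < k")
    case True then show ?thesis using Suc by (simp add: nth_append resp_len)
  next
    case False then have "i = k" using Suc.prems by simp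
    then show ?thesis by (simp add: nth_append resp_len)
  qed
qed

lemma resp_drop: "drop 1 c = drop 1 c' \<Longrightarrow> responses s c k = responses s c' k"
proof (induction k)
  case 0 then show ?case by simp
next
  case (Suc k)
  have "drop (Suc k) c = drop k (drop 1 c)" by simp
  also have "\<dots> = drop k (drop 1 c')" using Suc.prems by simp
  also have "\<dots> = drop (Suc k) c'" by simp
  finally show ?case using Suc by simp
qed

lemma resp_hd: "0 < k \<Longrightarrow> responses s c k ! 0 = s 0 (drop 1 c) []"
  using resp_prefix[of 0 k s c] by simp

lemma finite_configs: "finite (configs q n)"
proof -
  have "configs q n \<subseteq> {xs. set xs \<subseteq> {..<q} \<and> length xs = n}"
    by (auto simp: configs_def)
  moreover have "finite {xs. set xs \<subseteq> {..<q} \<and> length xs = (n::nat)}"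
    by (rule finite_lists_length_eq) simp
  ultimately show ?thesis by (rule finite_subset)
qed

theorem lemma4:
  fixes q n :: nat and s :: strategy
  assumes "n \<ge> 1" and "q > 1"
    and "optimal_strategy q n s"
  shows "restricted_strategy q n s"
  unfolding restricted_strategy_def
proof (intro ballI allI impI, rule ccontr)
  fix c0 i g
  assume c0: "c0 \<in> configs q n" and i: "1 \<le> i \<and> i < n"
    and r: "responses s c0 n ! i = Guess g" and ng: "g \<noteq> c0 ! i"
  have vs: "valid_strategy q s" and opt: "\<And>t. valid_strategy q t \<Longrightarrow> success_prob q n t \<le> success_prob q n s"
    using assms(3) unfolding optimal_strategy_def by auto
  have lc0: "length c0 = n" using c0 by (simp add: configs_def)
  define d0 where "d0 = drop 1 c0"
  define t :: strategy where "t = (\<lambda>j seen heard. if j = 0 then (if seen = d0 then Guess 0 else s 0 seen heard)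
      else if heard \<noteq> [] \<and> hd heard = Guess 0 then Pass else s j seen heard)"
  have bad: "\<not> wins s c" if "drop 1 c = d0" "length c = n" for c
  proof
    assume w: "wins s c"
    have e: "responses s c n = responses s c0 n" using that(1) d0_def by (intro resp_drop) simp
    have "c ! i = drop 1 c ! (i - 1)" using i that(2) by simp
    also have "\<dots> = drop 1 c0 ! (i - 1)" using that(1) d0_def by simp
    also have "\<dots> = c0 ! i" using i lc0 by simp
    finally have ci: "c ! i = c0 ! i" .
    from w have "\<forall>j<length c. \<forall>g. responses s c n ! j = Guess g \<longrightarrow> g = c ! j"
      unfolding wins_def Let_def using that(2) by simp
    then have "g = c ! i" using r e i that(2) by auto
    then show False using ci ng by simp
  qed
  have tA: "responses t c k = (if k = 0 then [] else Guess 0 # replicate (k-1) Pass)"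
    if "t 0 (drop 1 c) [] = Guess 0" for c k
  proof (induction k)
    case 0 then show ?case by simp
  next
    case (Suc k)
    show ?case
    proof (cases k)
      case 0 then show ?thesis using that by simp
    next
      case (Suc m)
      then show ?thesis using Suc.IH by (simp add: t_def replicate_append_same)
    qed
  qed
  have tB: "responses t c k = responses s c k"
    if "drop 1 c \<noteq> d0" "s 0 (drop 1 c) [] \<noteq> Guess 0" for c k
  proof (induction k)
    case 0 then show ?case by simp
  next
    case (Suc k)
    show ?case
    proof (cases k)
      case 0 then show ?thesis using that by (simp add: t_def)
    next
      case (Suc m)
      have ne: "responses s c k \<noteq> []" using resp_len[of s c k] Suc by auto
      have "hd (responses s c k) = s 0 (drop 1 c) []"
        using ne resp_hd[of k s c] Suc by (simp add: hd_conv_nth)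
      then have tk: "t k (drop (Suc k) c) (responses s c k) = s k (drop (Suc k) c) (responses s c k)"
        using ne that Suc unfolding t_def by simp
      have "responses t c (Suc k) = responses t c k @ [t k (drop (Suc k) c) (responses t c k)]" by simp
      also have "\<dots> = responses s c k @ [s k (drop (Suc k) c) (responses s c k)]" by (simp only: Suc.IH tk)
      finally show ?thesis using tk by simp
    qed
  qed
  have winsA: "wins t c" if "t 0 (drop 1 c) [] = Guess 0" "length c = n" "c ! 0 = 0" for c
  proof -
    have e: "responses t c n = Guess 0 # replicate (n-1) Pass" using tA[OF that(1)] assms(1) by simp
    have "\<forall>j<n. \<forall>g'. responses t c n ! j = Guess g' \<longrightarrow> g' = c ! j"
    proof (intro allI impI)
      fix j g' assume "j < n" "responses t c n ! j = Guess g'"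
      then show "g' = c ! j" using e that(3) by (cases j) auto
    qed
    moreover have "responses t c n ! 0 = Guess (c ! 0)" using e that(3) by simp
    moreover have "0 < length c" using that(2) assms(1) by simp
    ultimately show ?thesis unfolding wins_def Let_def using that(2) by blast
  qed
  have mono: "wins t c" if "c \<in> configs q n" "wins s c" for c
  proof -
    have lc: "length c = n" using that(1) by (simp add: configs_def)
    show ?thesis
    proof (cases "t 0 (drop 1 c) [] = Guess 0")
      case True
      have nd: "drop 1 c \<noteq> d0" using bad[OF _ lc] that(2) by blast
      then have s0: "s 0 (drop 1 c) [] = Guess 0" using True by (simp add: t_def)
      have "responses s c n ! 0 = Guess 0" using resp_hd[of n s c] s0 assms(1) by simp
      moreover have "\<forall>j<length c. \<forall>g. responses s c n ! j = Guess g \<longrightarrow> g = c ! j"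
        using that(2) lc unfolding wins_def Let_def by simp
      ultimately have "c ! 0 = 0" using lc assms(1) by force
      then show ?thesis using winsA[OF True lc] by simp
    next
      case False
      then have nd: "drop 1 c \<noteq> d0" by (auto simp: t_def)
      then have "s 0 (drop 1 c) [] \<noteq> Guess 0" using False by (simp add: t_def)
      then have "responses t c n = responses s c n" using tB nd by simp
      then show ?thesis using that(2) lc unfolding wins_def Let_def by simp
    qed
  qed
  define c1 where "c1 = c0[0 := 0]"
  obtain a rest where c0e: "c0 = a # rest" using lc0 assms(1) by (cases c0) auto
  have c1e: "c1 = 0 # rest" using c0e c1_def by simp
  have dc1: "drop 1 c1 = d0" using c0e c1e d0_def by simp
  have lc1: "length c1 = n" using c1e c0e lc0 by simp
  have c1c: "c1 \<in> configs q n"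
    using c0 c0e c1e assms(2) by (auto simp: configs_def)
  have nw: "\<not> wins s c1" using bad[OF dc1 lc1] .
  have wt: "wins t c1" using winsA[of c1] dc1 lc1 c1e by (simp add: t_def)
  have vt: "valid_strategy q t"
    using vs assms(2) unfolding valid_strategy_def t_def by (auto split: if_splits)
  let ?A = "{c \<in> configs q n. wins s c}" and ?B = "{c \<in> configs q n. wins t c}"
  have "?A \<subset> ?B" using mono c1c nw wt by blast
  moreover have "finite ?B" using finite_configs by simp
  ultimately have "card ?A < card ?B" by (rule psubset_card_mono[rotated])
  moreover have "real q ^ n > 0" using assms(2) by simp
  ultimately have "success_prob q n s < success_prob q n t"
    unfolding success_prob_def by (simp add: divide_strict_right_mono)
  then show False using opt[OF vt] by simp
qed

end
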